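(* Consider the system $\dot x=-\nabla\psi(x)+Jx+Bu$, $y=Cx+\rho(u)$ on $\mathbb R^n$, where $\psi:\mathbb R^n\to\mathbb R$ is continuously differentiable and strictly convex with $\lim_{\|x\|\to\infty}\psi(x)/\|x\|=\infty$, $J$ is skew-symmetric, $B,C\in\mathbb R^{n\times n}$ are invertible, and $\rho:\mathbb R^n\to\mathbb R^n$. Let $\Phi:\mathbb R^n\to\mathbb R^n$ be the inverse of the map $y\mapsto B^{-1}\nabla\psi(C^{-1}y)-B^{-1}JC^{-1}y$. If $\Phi+\rho$ is the gradient of a (differentiable) convex function, then the steady-state input-output relation of the system is cyclically monotone; if $\Phi+\rho$ is the gradient of a strictly convex function, then the steady-state input-output relation is strictly cyclically monotone.
   Context: The steady-state input-output relation of the system is the set of pairs $(\mathrm u,\mathrm y)\in\mathbb R^n\times\mathbb R^n$ such that there is $\mathrm x$ with $-\nabla\psi(\mathrm x)+J\mathrm x+B\mathrm u=0$ and $\mathrm y=C\mathrm x+\rho(\mathrm u)$. (Under the hypotheses the map $x\mapsto\nabla\psi(x)-Jx$ is a bijection of $\mathbb R^n$, so $\Phi$ is well defined.) A relation $R\subseteq\mathbb R^n\times\mathbb R^n$ is cyclically monotone if for every $N\ge1$ and $(u_1,y_1),\dots,(u_N,y_N)\in R$, $\sum_{i=1}^Ny_i^T(u_i-u_{i-1})\ge0$ with $u_0=u_N$; strictly cyclically monotone if this inequality is strict whenever at least two of the $u_i$ are distinct. *)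

theory Defs
  imports "HOL-Analysis.Analysis"
begin

definition strictly_convex_on :: "'a::real_vector set \<Rightarrow> ('a \<Rightarrow> real) \<Rightarrow> bool" where
  "strictly_convex_on S f \<longleftrightarrow> convex S \<and>
    (\<forall>x\<in>S. \<forall>y\<in>S. \<forall>t. x \<noteq> y \<and> 0 < t \<and> t < 1 \<longrightarrow>
       f ((1 - t) *\<^sub>R x + t *\<^sub>R y) < (1 - t) * f x + t * f y)"

definition cyc_sum :: "nat \<Rightarrow> (nat \<Rightarrow> 'a::real_inner) \<Rightarrow> (nat \<Rightarrow> 'a) \<Rightarrow> real" where
  "cyc_sum N u y = (\<Sum>i=1..N. y i \<bullet> (u i - u (if i = 1 then N else i - 1)))"

definition cyclically_monotone :: "('a::real_inner \<times> 'a) set \<Rightarrow> bool" where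
  "cyclically_monotone R \<longleftrightarrow>
    (\<forall>N\<ge>1. \<forall>u y. (\<forall>i\<in>{1..N}. (u i, y i) \<in> R) \<longrightarrow> cyc_sum N u y \<ge> 0)"

definition strictly_cyclically_monotone :: "('a::real_inner \<times> 'a) set \<Rightarrow> bool" where
  "strictly_cyclically_monotone R \<longleftrightarrow>
    (\<forall>N\<ge>1. \<forall>u y. (\<forall>i\<in>{1..N}. (u i, y i) \<in> R) \<longrightarrow>
       (\<exists>i\<in>{1..N}. \<exists>j\<in>{1..N}. u i \<noteq> u j) \<longrightarrow> cyc_sum N u y > 0)"

text \<open>Steady-state input-output relation of
  x' = -grad psi x + J x + B u, y = C x + rho u  (gpsi = grad psi).\<close>
definition steady_state_io ::
  "(real^'n \<Rightarrow> real^'n) \<Rightarrow> real^'n^'n \<Rightarrow> real^'n^'n \<Rightarrow> real^'n^'n \<Rightarrow> (real^'n \<Rightarrow> real^'n)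
   \<Rightarrow> ((real^'n) \<times> (real^'n)) set" where
  "steady_state_io gpsi J B C rho =
     {(u, y). \<exists>x. - gpsi x + J *v x + B *v u = 0 \<and> y = C *v x + rho u}"

end

theory Submission
  imports Defs
begin

lemma minv:
  fixes A :: "real^'n^'n"
  assumes "invertible A"
  shows "A ** matrix_inv A = mat 1 \<and> matrix_inv A ** A = mat 1"
  using assms unfolding invertible_def matrix_inv_def by (rule someI_ex)

lemma minv_l: "invertible (A::real^'n^'n) \<Longrightarrow> matrix_inv A *v (A *v x) = x"
  by (metis minv matrix_vector_mul_assoc matrix_vector_mul_lid)

lemma minv_r: "invertible (A::real^'n^'n) \<Longrightarrow> A *v (matrix_inv A *v x) = x"
  by (metis minv matrix_vector_mul_assoc matrix_vector_mul_lid)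

lemma tangent:
  fixes F :: "'a::real_inner \<Rightarrow> real"
  assumes cv: "convex_on UNIV F" and d: "(F has_derivative (\<lambda>h. D \<bullet> h)) (at u)"
  shows "F v \<ge> F u + D \<bullet> (v - u)"
proof -
  define g where "g t = F (u + t *\<^sub>R (v-u))" for t :: real
  have cg: "convex_on UNIV g"
  proof (rule convex_onI)
    fix t x y :: real assume t: "0 < t" "t < 1"
    have e: "u + ((1-t)*x + t*y) *\<^sub>R (v-u) = (1-t) *\<^sub>R (u + x*\<^sub>R(v-u)) + t *\<^sub>R (u + y *\<^sub>R (v-u))"
      by (simp add: algebra_simps)
    show "g ((1-t)*\<^sub>R x + t*\<^sub>R y) \<le> (1-t)*g x + t*g y"
      unfolding g_def using convex_onD[OF cv, of t "u + x*\<^sub>R(v-u)" "u + y *\<^sub>R (v-u)"] t e by simp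
  qed simp
  have d1: "((\<lambda>t. u + t *\<^sub>R (v-u)) has_derivative (\<lambda>h. h *\<^sub>R (v-u))) (at (0::real))"
    by (auto intro!: derivative_eq_intros)
  have d2: "(F has_derivative (\<lambda>h. D \<bullet> h)) (at (u + (0::real) *\<^sub>R (v-u)))" using d by simp
  have "((\<lambda>t. F (u + t *\<^sub>R (v - u))) has_derivative ((\<lambda>h. D \<bullet> h) \<circ> (\<lambda>h. h *\<^sub>R (v-u)))) (at 0)"
    using diff_chain_at[OF d1 d2] by (simp add: o_def)
  moreover have "((\<lambda>h. D \<bullet> h) \<circ> (\<lambda>h. h *\<^sub>R (v-u))) = (*) (D \<bullet> (v-u))"
    by (auto simp: fun_eq_iff)
  ultimately have "(g has_field_derivative (D \<bullet> (v-u))) (at 0 within UNIV)"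
    unfolding g_def has_field_derivative_def by simp
  from convex_on_imp_above_tangent[OF cg _ _ _ this, of 1]
  show ?thesis by (simp add: g_def)
qed

lemma sconv_conv: "strictly_convex_on UNIV F \<Longrightarrow> convex_on UNIV F"
  unfolding strictly_convex_on_def
  apply (rule convex_onI)
   apply (case_tac "x = y")
    apply (simp add: algebra_simps)
  apply (smt (verit))
  by simp

lemma stangent:
  fixes F :: "'a::real_inner \<Rightarrow> real"
  assumes sc: "strictly_convex_on UNIV F" and d: "(F has_derivative (\<lambda>h. D \<bullet> h)) (at u)"
    and ne: "v \<noteq> u"
  shows "F v > F u + D \<bullet> (v - u)"
proof -
  define m where "m = (1/2::real) *\<^sub>R u + (1/2::real) *\<^sub>R v"
  have "F m < (1 - 1/2) * F u + (1/2) * F v"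
  proof -
    have "\<forall>x\<in>UNIV. \<forall>y\<in>UNIV. \<forall>t. x \<noteq> y \<and> 0 < t \<and> t < 1 \<longrightarrow>
       F ((1 - t) *\<^sub>R x + t *\<^sub>R y) < (1 - t) * F x + t * F y"
      using sc unfolding strictly_convex_on_def by blast
    then have "\<forall>t. u \<noteq> v \<and> 0 < t \<and> t < 1 \<longrightarrow>
       F ((1 - t) *\<^sub>R u + t *\<^sub>R v) < (1 - t) * F u + t * F v"
      by (meson UNIV_I)
    then have "u \<noteq> v \<and> 0 < (1/2::real) \<and> (1/2::real) < 1 \<longrightarrow>
       F ((1 - 1/2) *\<^sub>R u + (1/2::real) *\<^sub>R v) < (1 - 1/2) * F u + (1/2) * F v"
      by (rule spec)
    then show ?thesis using ne unfolding m_def by simp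
  qed
  moreover have "F m \<ge> F u + D \<bullet> (m - u)" using tangent[OF sconv_conv[OF sc] d] by blast
  moreover have "m - u = (1/2) *\<^sub>R (v - u)"
  proof -
    have h: "(1/2::real) *\<^sub>R u + (1/2) *\<^sub>R u = u" using scaleR_add_left[of "1/2::real" "1/2" u] by simp
    have "m - u = ((1/2::real) *\<^sub>R u + (1/2) *\<^sub>R v) - ((1/2::real) *\<^sub>R u + (1/2) *\<^sub>R u)"
      by (simp only: h m_def)
    also have "\<dots> = (1/2::real) *\<^sub>R v - (1/2) *\<^sub>R u" by (simp add: algebra_simps)
    also have "\<dots> = (1/2::real) *\<^sub>R (v - u)" by (simp add: scaleR_diff_right)
    finally show ?thesis .
  qed
  ultimately show ?thesis by (simp add: inner_scaleR_right)
qed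

lemma cyc_tele:
  fixes f :: "nat \<Rightarrow> real"
  assumes "N \<ge> 1"
  shows "(\<Sum>i=1..N. f (if i = 1 then N else i - 1)) = (\<Sum>i=1..N. f i)"
proof -
  obtain m where N: "N = Suc m" using assms by (cases N) auto
  have a: "{1..Suc m} = insert 1 {Suc 1..Suc m}" by auto
  have "(\<Sum>i=1..N. f (if i = 1 then N else i - 1)) = f N + (\<Sum>i=Suc 1..Suc m. f (i - 1))"
    unfolding N a by (subst sum.insert) (auto intro!: sum.cong)
  also have "(\<Sum>i=Suc 1..Suc m. f (i - 1)) = (\<Sum>i=1..m. f i)"
    by (subst sum.shift_bounds_cl_Suc_ivl) simp
  also have "f N + (\<Sum>i=1..m. f i) = (\<Sum>i=1..N. f i)" unfolding N by simp
  finally show ?thesis .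
qed

lemma cyc_const:
  fixes u :: "nat \<Rightarrow> 'a"
  assumes "\<forall>i\<in>{1..N}. u i = u (if i = 1 then N else i - 1)"
  shows "\<forall>i\<in>{1..N}. u i = u 1"
proof -
  have *: "1 \<le> k \<Longrightarrow> k \<le> N \<Longrightarrow> u k = u 1" for k
  proof (induction k)
    case (Suc k)
    show ?case
    proof (cases "k = 0")
      case False
      have "Suc k \<in> {1..N}" using Suc.prems by simp
      with assms have "u (Suc k) = u (if Suc k = 1 then N else Suc k - 1)" by blast
      with False have "u (Suc k) = u k" by simp
      moreover have "u k = u 1" using Suc.IH Suc.prems False by simp
      ultimately show ?thesis by simp
    qed simp
  qed simp
  show ?thesis
  proof
    fix i assume "i \<in> {1..N}"
    then have "1 \<le> i" "i \<le> N" by auto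
    then show "u i = u 1" by (rule *)
  qed
qed

theorem mainTheorem12:
  fixes psi :: "real^'n \<Rightarrow> real"
    and gpsi :: "real^'n \<Rightarrow> real^'n"
    and J B C :: "real^'n^'n"
    and rho :: "real^'n \<Rightarrow> real^'n"
  assumes grad: "\<And>x. (psi has_derivative (\<lambda>h. gpsi x \<bullet> h)) (at x)"
    and cont: "continuous_on UNIV gpsi"
    and sconv: "strictly_convex_on UNIV psi"
    and coerc: "filterlim (\<lambda>x. psi x / norm x) at_top at_infinity"
    and skew: "transpose J = - J"
    and invB: "invertible B"
    and invC: "invertible C"
  defines "Phi \<equiv> inv (\<lambda>y. matrix_inv B *v gpsi (matrix_inv C *v y)
                          - matrix_inv B *v (J *v (matrix_inv C *v y)))"
  shows "((\<exists>F. convex_on UNIV F \<and> (\<forall>u. (F has_derivative (\<lambda>h. (Phi u + rho u) \<bullet> h)) (at u)))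
            \<longrightarrow> cyclically_monotone (steady_state_io gpsi J B C rho))
       \<and> ((\<exists>F. strictly_convex_on UNIV F \<and> (\<forall>u. (F has_derivative (\<lambda>h. (Phi u + rho u) \<bullet> h)) (at u)))
            \<longrightarrow> strictly_cyclically_monotone (steady_state_io gpsi J B C rho))"
proof -
  define gm where "gm = (\<lambda>y. matrix_inv B *v gpsi (matrix_inv C *v y)
                          - matrix_inv B *v (J *v (matrix_inv C *v y)))"
  have Phi': "Phi = inv gm" unfolding Phi_def gm_def ..
  have negJ: "(-J) *v w = -(J *v w)" for w
    by (simp add: matrix_vector_mult_def vec_eq_iff sum_negf)
  have skw: "(J *v w) \<bullet> w = 0" for w
  proof -
    have "(J *v w) \<bullet> w = w \<bullet> (J *v w)" by (simp add: inner_commute)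
    also have "\<dots> = (w v* J) \<bullet> w" by (simp add: dot_lmul_matrix)
    also have "w v* J = transpose J *v w" by simp
    also have "\<dots> = - (J *v w)" using skew negJ by simp
    finally show ?thesis by simp
  qed
  have mono: "(gpsi x1 - gpsi x2) \<bullet> (x1 - x2) > 0" if ne: "x1 \<noteq> x2" for x1 x2
  proof -
    have a: "psi x2 > psi x1 + gpsi x1 \<bullet> (x2 - x1)" using stangent[OF sconv grad[of x1], of x2] ne by simp
    have b: "psi x1 > psi x2 + gpsi x2 \<bullet> (x1 - x2)" using stangent[OF sconv grad[of x2], of x1] ne by simp
    have "gpsi x1 \<bullet> (x2 - x1) = - (gpsi x1 \<bullet> (x1 - x2))"
      by (metis inner_minus_right minus_diff_eq)
    with a b show ?thesis by (simp add: inner_diff_left)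
  qed
  have gmx: "gm z = matrix_inv B *v (gpsi (matrix_inv C *v z) - J *v (matrix_inv C *v z))" for z
    by (simp add: gm_def matrix_vector_mult_diff_distrib)
  have inj: "inj gm"
  proof (rule injI)
    fix z1 z2 assume eq: "gm z1 = gm z2"
    define x1 where "x1 = matrix_inv C *v z1"
    define x2 where "x2 = matrix_inv C *v z2"
    have "B *v gm z1 = B *v gm z2" using eq by simp
    then have e: "gpsi x1 - J *v x1 = gpsi x2 - J *v x2"
      unfolding gmx minv_r[OF invB] x1_def x2_def .
    have "x1 = x2"
    proof (rule ccontr)
      assume ne: "x1 \<noteq> x2"
      have "gpsi x1 - gpsi x2 = J *v (x1 - x2)" using e
        by (simp add: matrix_vector_mult_diff_distrib algebra_simps)
      then have "(gpsi x1 - gpsi x2) \<bullet> (x1 - x2) = 0" using skw by simp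
      with mono[OF ne] show False by simp
    qed
    then show "z1 = z2" using minv_r[OF invC, of z1] minv_r[OF invC, of z2]
      unfolding x1_def x2_def by metis
  qed
  have key: "y = Phi u + rho u" if uy: "(u, y) \<in> steady_state_io gpsi J B C rho" for u y
  proof -
    obtain x where x: "- gpsi x + J *v x + B *v u = 0" "y = C *v x + rho u"
      using uy unfolding steady_state_io_def by blast
    have "gpsi x - J *v x = B *v u" using x(1) by (simp add: algebra_simps)
    then have "gm (C *v x) = u" unfolding gmx minv_l[OF invC] by (simp add: minv_l[OF invB])
    then have "Phi u = C *v x" unfolding Phi' using inv_f_f[OF inj] by metis
    with x(2) show ?thesis by simp
  qed
  show ?thesis
  proof (intro conjI impI)
    assume "\<exists>F. convex_on UNIV F \<and> (\<forall>u. (F has_derivative (\<lambda>h. (Phi u + rho u) \<bullet> h)) (at u))"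
    then obtain F where cF: "convex_on UNIV F"
      and dF: "\<And>u. (F has_derivative (\<lambda>h. (Phi u + rho u) \<bullet> h)) (at u)" by blast
    show "cyclically_monotone (steady_state_io gpsi J B C rho)"
      unfolding cyclically_monotone_def
    proof (intro allI impI)
      fix N :: nat and u y :: "nat \<Rightarrow> real^'n"
      assume N: "N \<ge> 1" and R: "\<forall>i\<in>{1..N}. (u i, y i) \<in> steady_state_io gpsi J B C rho"
      let ?p = "\<lambda>i. if i = 1 then N else i - 1"
      have "(\<Sum>i=1..N. F (u i) - F (u (?p i))) \<le> cyc_sum N u y"
        unfolding cyc_sum_def
      proof (rule sum_mono)
        fix i assume i: "i \<in> {1..N}"
        have yi: "y i = Phi (u i) + rho (u i)" using key R i by blast
        have "F (u (?p i)) \<ge> F (u i) + y i \<bullet> (u (?p i) - u i)"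
          using tangent[OF cF dF[of "u i"]] yi by simp
        moreover have "y i \<bullet> (u (?p i) - u i) = - (y i \<bullet> (u i - u (?p i)))"
          by (metis inner_minus_right minus_diff_eq)
        ultimately show "F (u i) - F (u (?p i)) \<le> y i \<bullet> (u i - u (?p i))" by simp
      qed
      moreover have "(\<Sum>i=1..N. F (u i) - F (u (?p i))) = 0"
        using cyc_tele[OF N, of "\<lambda>i. F (u i)"] by (simp add: sum_subtractf)
      ultimately show "cyc_sum N u y \<ge> 0" by simp
    qed
  next
    assume "\<exists>F. strictly_convex_on UNIV F \<and> (\<forall>u. (F has_derivative (\<lambda>h. (Phi u + rho u) \<bullet> h)) (at u))"
    then obtain F where sF: "strictly_convex_on UNIV F"
      and dF: "\<And>u. (F has_derivative (\<lambda>h. (Phi u + rho u) \<bullet> h)) (at u)" by blast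
    note cF = sconv_conv[OF sF]
    show "strictly_cyclically_monotone (steady_state_io gpsi J B C rho)"
      unfolding strictly_cyclically_monotone_def
    proof (intro allI impI)
      fix N :: nat and u y :: "nat \<Rightarrow> real^'n"
      assume N: "N \<ge> 1" and R: "\<forall>i\<in>{1..N}. (u i, y i) \<in> steady_state_io gpsi J B C rho"
        and dist: "\<exists>i\<in>{1..N}. \<exists>j\<in>{1..N}. u i \<noteq> u j"
      let ?p = "\<lambda>i. if i = 1 then N else i - 1"
      have le: "F (u i) - F (u (?p i)) \<le> y i \<bullet> (u i - u (?p i))" if i: "i \<in> {1..N}" for i
      proof -
        have yi: "y i = Phi (u i) + rho (u i)" using key R i by blast
        have "F (u (?p i)) \<ge> F (u i) + y i \<bullet> (u (?p i) - u i)"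
          using tangent[OF cF dF[of "u i"]] yi by simp
        moreover have "y i \<bullet> (u (?p i) - u i) = - (y i \<bullet> (u i - u (?p i)))"
          by (metis inner_minus_right minus_diff_eq)
        ultimately show "F (u i) - F (u (?p i)) \<le> y i \<bullet> (u i - u (?p i))" by simp
      qed
      have "\<exists>i\<in>{1..N}. u i \<noteq> u (?p i)"
      proof (rule ccontr)
        assume "\<not> ?thesis"
        then have "\<forall>i\<in>{1..N}. u i = u (?p i)" by blast
        from cyc_const[OF this] dist show False by metis
      qed
      then obtain i where i: "i \<in> {1..N}" "u i \<noteq> u (?p i)" by blast
      have lt: "F (u i) - F (u (?p i)) < y i \<bullet> (u i - u (?p i))"
      proof -
        have yi: "y i = Phi (u i) + rho (u i)" using key R i by blast
        have "F (u (?p i)) > F (u i) + y i \<bullet> (u (?p i) - u i)"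
          using stangent[OF sF dF[of "u i"]] yi i(2) by simp
        moreover have "y i \<bullet> (u (?p i) - u i) = - (y i \<bullet> (u i - u (?p i)))"
          by (metis inner_minus_right minus_diff_eq)
        ultimately show ?thesis by simp
      qed
      have "(\<Sum>i=1..N. F (u i) - F (u (?p i))) < cyc_sum N u y"
        unfolding cyc_sum_def
        proof (rule sum_strict_mono_ex1)
          show "\<forall>x\<in>{1..N}. F (u x) - F (u (?p x)) \<le> y x \<bullet> (u x - u (?p x))" using le by blast
          show "\<exists>a\<in>{1..N}. F (u a) - F (u (?p a)) < y a \<bullet> (u a - u (?p a))" using i(1) lt by blast
        qed simp
      moreover have "(\<Sum>i=1..N. F (u i) - F (u (?p i))) = 0"
        using cyc_tele[OF N, of "\<lambda>i. F (u i)"] by (simp add: sum_subtractf)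
      ultimately show "cyc_sum N u y > 0" by simp
    qed
  qed
qed

end
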